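(* Let $\mathcal{P}$ be a partition of $\mathbb{R}^{2}$. Suppose there exists $D\in(0,\infty)$ that is a strict pairwise bound for every $X\in\mathcal{P}$, and let $\epsilon\in(0,\infty)$ be such that $|\mathcal{N}_{\epsilon}(\vec{p})|\leq 3$ for all $\vec{p}\in\mathbb{R}^{2}$. Then $\epsilon\leq\frac{D}{4}$.
   Context: On $\mathbb{R}^2$ use $d_{max}(\vec{x},\vec{y})=\max_i|x_i-y_i|$; $D$ is a strict pairwise bound for $X$ if $d_{max}(\vec{x},\vec{y})<D$ for all $\vec{x},\vec{y}\in X$; $\overline{B}_{\epsilon}(\vec{p})=\{\vec{x}: d_{max}(\vec{x},\vec{p})\le\epsilon\}$; $\mathcal{N}_{\epsilon}(\vec{p})=\{X\in\mathcal{P}: X\cap\overline{B}_{\epsilon}(\vec{p})\neq\emptyset\}$. *)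

theory Defs
  imports "HOL-Analysis.Analysis"
begin

type_synonym pt = "real \<times> real"

definition dmax :: "pt \<Rightarrow> pt \<Rightarrow> real" where
  "dmax x y = max \<bar>fst x - fst y\<bar> \<bar>snd x - snd y\<bar>"

definition strict_pairwise_bound :: "real \<Rightarrow> pt set \<Rightarrow> bool" where
  "strict_pairwise_bound D X \<longleftrightarrow> (\<forall>x\<in>X. \<forall>y\<in>X. dmax x y < D)"

definition closed_ball_max :: "real \<Rightarrow> pt \<Rightarrow> pt set" where
  "closed_ball_max e p = {x. dmax x p \<le> e}"

definition nbhd :: "pt set set \<Rightarrow> real \<Rightarrow> pt \<Rightarrow> pt set set" where
  "nbhd P e p = {X \<in> P. X \<inter> closed_ball_max e p \<noteq> {}}"

definition is_partition :: "pt set set \<Rightarrow> bool" where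
  "is_partition P \<longleftrightarrow> {} \<notin> P \<and> \<Union>P = UNIV \<and>
     (\<forall>X\<in>P. \<forall>Y\<in>P. X \<noteq> Y \<longrightarrow> X \<inter> Y = {})"

end

theory Submission
  imports Defs
begin

definition Sof :: "pt set set \<Rightarrow> pt \<Rightarrow> pt set" where
  "Sof P y = (SOME X. X \<in> P \<and> y \<in> X)"

lemma Sof:
  assumes "is_partition P"
  shows "Sof P y \<in> P \<and> y \<in> Sof P y"
proof -
  have "\<exists>X. X \<in> P \<and> y \<in> X" using assms unfolding is_partition_def by blast
  then show ?thesis unfolding Sof_def by (rule someI_ex)
qed

lemma cell_dist:
  fixes r :: real
  assumes "b \<le> a" "a \<le> Suc b" "r \<ge> 0"
  shows "\<bar>r * real a - r * real b\<bar> \<le> r"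
proof -
  have "a = b \<or> a = Suc b" using assms by linarith
  then show ?thesis using assms by (auto simp: algebra_simps)
qed

lemma junction:
  assumes part: "is_partition P"
    and bound: "\<forall>X\<in>P. strict_pairwise_bound D X"
    and rho: "\<rho> > 0"
  shows "\<exists>M Z1 Z2 Z3 z1 z2 z3. Z1 \<in> P \<and> Z2 \<in> P \<and> Z3 \<in> P \<and>
     Z1 \<noteq> Z2 \<and> Z1 \<noteq> Z3 \<and> Z2 \<noteq> Z3 \<and> z1 \<in> Z1 \<and> z2 \<in> Z2 \<and> z3 \<in> Z3 \<and>
     dmax z1 M \<le> \<rho> \<and> dmax z2 M \<le> \<rho> \<and> dmax z3 M \<le> \<rho>"
proof -
  define p where "p = nat \<lceil>D / \<rho>\<rceil> + 1"
  have p0: "0 < p" unfolding p_def by simp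
  have "D / \<rho> \<le> real p" unfolding p_def by linarith
  then have Lge: "D \<le> \<rho> * real p" using rho by (simp add: field_simps)
  define g where "g x = (\<rho> * real (x (0::nat)), \<rho> * real (x (1::nat)))" for x :: "nat \<Rightarrow> nat"
  define F where "F X = (\<lambda>j::nat. if j = 0 then (if \<exists>q\<in>X. fst q \<ge> \<rho> * real p then 1 else 0)
     else if j = 1 then (if \<exists>q\<in>X. snd q \<ge> \<rho> * real p then 1 else 0) else (0::nat))" for X :: "pt set"
  define lab where "lab x = F (Sof P (g x))" for x
  have c1: "\<forall>x j. (\<forall>j. x j \<le> p) \<and> j < 2 \<and> x j = 0 \<longrightarrow> lab x j = 0"
  proof (intro allI impI)
    fix x :: "nat \<Rightarrow> nat" and j :: nat
    assume a: "(\<forall>j. x j \<le> p) \<and> j < 2 \<and> x j = 0"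
    have S: "Sof P (g x) \<in> P" "g x \<in> Sof P (g x)" using Sof[OF part] by auto
    have sp: "\<forall>q\<in>Sof P (g x). dmax q (g x) < D"
      using bound S unfolding strict_pairwise_bound_def by blast
    show "lab x j = 0"
    proof (cases "j = 0")
      case True
      have "\<not> (\<exists>q\<in>Sof P (g x). fst q \<ge> \<rho> * real p)"
      proof
        assume "\<exists>q\<in>Sof P (g x). fst q \<ge> \<rho> * real p"
        then obtain q where q: "q \<in> Sof P (g x)" "fst q \<ge> \<rho> * real p" by blast
        have "dmax q (g x) < D" using sp q by blast
        moreover have "fst (g x) = 0" using a True by (simp add: g_def)
        ultimately show False using q Lge unfolding dmax_def by auto
      qed
      then show ?thesis using True by (simp add: lab_def F_def)
    next
      case False
      then have j1: "j = 1" using a by auto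
      have "\<not> (\<exists>q\<in>Sof P (g x). snd q \<ge> \<rho> * real p)"
      proof
        assume "\<exists>q\<in>Sof P (g x). snd q \<ge> \<rho> * real p"
        then obtain q where q: "q \<in> Sof P (g x)" "snd q \<ge> \<rho> * real p" by blast
        have "dmax q (g x) < D" using sp q by blast
        moreover have "snd (g x) = 0" using a j1 by (simp add: g_def)
        ultimately show False using q Lge unfolding dmax_def by auto
      qed
      then show ?thesis using j1 by (simp add: lab_def F_def)
    qed
  qed
  have c2: "\<forall>x j. (\<forall>j. x j \<le> p) \<and> j < 2 \<and> x j = p \<longrightarrow> lab x j = 1"
  proof (intro allI impI)
    fix x :: "nat \<Rightarrow> nat" and j :: nat
    assume a: "(\<forall>j. x j \<le> p) \<and> j < 2 \<and> x j = p"
    have S: "g x \<in> Sof P (g x)" using Sof[OF part] by auto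
    show "lab x j = 1"
    proof (cases "j = 0")
      case True
      have "fst (g x) = \<rho> * real p" using a True by (simp add: g_def)
      then have "\<exists>q\<in>Sof P (g x). fst q \<ge> \<rho> * real p" using S by force
      then show ?thesis using True by (simp add: lab_def F_def)
    next
      case False
      then have j1: "j = 1" using a by auto
      have "snd (g x) = \<rho> * real p" using a j1 by (simp add: g_def)
      then have "\<exists>q\<in>Sof P (g x). snd q \<ge> \<rho> * real p" using S by force
      then show ?thesis using j1 by (simp add: lab_def F_def)
    qed
  qed
  have "odd (card {s. ksimplex p 2 s \<and> (reduced 2 \<circ> lab) ` s = {..2}})"
    by (rule kuhn_combinatorial[OF p0 c1 c2])
  then have "{s. ksimplex p 2 s \<and> (reduced 2 \<circ> lab) ` s = {..2}} \<noteq> {}"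
    by (rule odd_card_imp_not_empty)
  then obtain s where s: "ksimplex p 2 s" and rl: "(reduced 2 \<circ> lab) ` s = {..2}" by blast
  from s obtain b u where ks: "kuhn_simplex p 2 b u s" by (auto elim: ksimplex.cases)
  have "0 \<in> (reduced 2 \<circ> lab) ` s" "1 \<in> (reduced 2 \<circ> lab) ` s" "2 \<in> (reduced 2 \<circ> lab) ` s"
    using rl by auto
  then obtain a0 a1 a2 where a: "a0 \<in> s" "a1 \<in> s" "a2 \<in> s"
    and r: "reduced 2 (lab a0) = 0" "reduced 2 (lab a1) = 1" "reduced 2 (lab a2) = 2"
    unfolding image_iff comp_apply by (elim bexE) (rule that, assumption+, simp_all)
  have dist: "dmax (g a) (g b) \<le> \<rho>" if "a \<in> s" for a
  proof -
    have "\<bar>\<rho> * real (a 0) - \<rho> * real (b 0)\<bar> \<le> \<rho>"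
      using kuhn_simplex.base_le[OF ks that] kuhn_simplex.le_Suc_base[OF ks that] rho
      by (intro cell_dist) auto
    moreover have "\<bar>\<rho> * real (a 1) - \<rho> * real (b 1)\<bar> \<le> \<rho>"
      using kuhn_simplex.base_le[OF ks that] kuhn_simplex.le_Suc_base[OF ks that] rho
      by (intro cell_dist) auto
    ultimately show ?thesis by (simp add: dmax_def g_def)
  qed
  have ne: "Sof P (g x) \<noteq> Sof P (g y)" if "reduced 2 (lab x) \<noteq> reduced 2 (lab y)" for x y
    using that unfolding lab_def by metis
  show ?thesis
    apply (rule exI[of _ "g b"])
    apply (rule exI[of _ "Sof P (g a0)"])
    apply (rule exI[of _ "Sof P (g a1)"])
    apply (rule exI[of _ "Sof P (g a2)"])
    apply (rule exI[of _ "g a0"])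
    apply (rule exI[of _ "g a1"])
    apply (rule exI[of _ "g a2"])
    using Sof[OF part] ne r dist a by simp
qed

lemma dmax_shift:
  "dmax z (fst M + a, snd M + c) \<le> dmax z M + max \<bar>a\<bar> \<bar>c\<bar>"
  unfolding dmax_def by auto

lemma four:
  assumes "finite N" "card N \<le> 3" "A \<in> N" "Z1 \<in> N" "Z2 \<in> N" "Z3 \<in> N"
    "Z1 \<noteq> Z2" "Z1 \<noteq> Z3" "Z2 \<noteq> Z3"
  shows "A = Z1 \<or> A = Z2 \<or> A = Z3"
proof (rule ccontr)
  assume "\<not> ?thesis"
  then have "card {A, Z1, Z2, Z3} = 4" using assms by auto
  moreover have "card {A, Z1, Z2, Z3} \<le> card N"
    using assms by (intro card_mono) auto
  ultimately show False using assms by linarith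
qed

theorem mainTheorem9:
  fixes P :: "pt set set" and D \<epsilon> :: real
  assumes "is_partition P"
    and "D > 0"
    and "\<forall>X\<in>P. strict_pairwise_bound D X"
    and "\<epsilon> > 0"
    and "\<forall>p. finite (nbhd P \<epsilon> p) \<and> card (nbhd P \<epsilon> p) \<le> 3"
  shows "\<epsilon> \<le> D / 4"
proof (rule ccontr)
  assume "\<not> \<epsilon> \<le> D / 4"
  define \<rho> where "\<rho> = \<epsilon> - D / 4"
  have rho: "\<rho> > 0" using \<open>\<not> \<epsilon> \<le> D / 4\<close> unfolding \<rho>_def by simp
  obtain M Z1 Z2 Z3 z1 z2 z3 where Z: "Z1 \<in> P" "Z2 \<in> P" "Z3 \<in> P"
     "Z1 \<noteq> Z2" "Z1 \<noteq> Z3" "Z2 \<noteq> Z3" "z1 \<in> Z1" "z2 \<in> Z2" "z3 \<in> Z3"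
     "dmax z1 M \<le> \<rho>" "dmax z2 M \<le> \<rho>" "dmax z3 M \<le> \<rho>"
    using junction[OF assms(1) assms(3) rho] by blast
  define cor where "cor s t = (fst M + s * (D/2), snd M + t * (D/2))" for s t :: real
  define cen where "cen s t = (fst M + s * (D/4), snd M + t * (D/4))" for s t :: real
  define S where "S s t = Sof P (cor s t)" for s t
  have key: "S s t = Z1 \<or> S s t = Z2 \<or> S s t = Z3" if st: "\<bar>s\<bar> = 1" "\<bar>t\<bar> = 1" for s t
  proof -
    let ?N = "nbhd P \<epsilon> (cen s t)"
    have inN: "X \<in> ?N" if "X \<in> P" "z \<in> X" "dmax z (cen s t) \<le> \<epsilon>" for X z
      using that unfolding nbhd_def closed_ball_max_def by blast
    have zb: "dmax z (cen s t) \<le> \<epsilon>" if "dmax z M \<le> \<rho>" for z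
    proof -
      have "dmax z (cen s t) \<le> dmax z M + max \<bar>s * (D/4)\<bar> \<bar>t * (D/4)\<bar>"
        unfolding cen_def by (rule dmax_shift)
      also have "max \<bar>s * (D/4)\<bar> \<bar>t * (D/4)\<bar> = D/4"
        using st assms(2) by (simp add: abs_mult)
      finally show ?thesis using that unfolding \<rho>_def by simp
    qed
    have cb: "dmax (cor s t) (cen s t) \<le> \<epsilon>"
    proof -
      have "dmax (cor s t) (cen s t) = max \<bar>s * (D/4)\<bar> \<bar>t * (D/4)\<bar>"
        unfolding dmax_def cor_def cen_def by (simp add: abs_minus_commute algebra_simps)
      also have "\<dots> = D/4" using st assms(2) by (simp add: abs_mult)
      finally show ?thesis using rho unfolding \<rho>_def by simp
    qed
    have "S s t \<in> ?N" using Sof[OF assms(1)] cb inN unfolding S_def by blast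
    moreover have "Z1 \<in> ?N" "Z2 \<in> ?N" "Z3 \<in> ?N" using Z zb inN by auto
    ultimately show ?thesis using four[of ?N] assms(5) Z by blast
  qed
  have distinct: "S s t \<noteq> S s' t'" if "\<bar>s - s'\<bar> = 2 \<or> \<bar>t - t'\<bar> = 2" for s t s' t'
  proof
    assume eq: "S s t = S s' t'"
    have "cor s t \<in> S s t" "cor s' t' \<in> S s t" "S s t \<in> P"
      using Sof[OF assms(1)] eq unfolding S_def by metis+
    then have "dmax (cor s t) (cor s' t') < D"
      using assms(3) unfolding strict_pairwise_bound_def by blast
    moreover have "dmax (cor s t) (cor s' t') \<ge> D"
    proof -
      have e1: "\<bar>s * (D/2) - s' * (D/2)\<bar> = \<bar>(s - s') * (D/2)\<bar>"
        by (simp only: left_diff_distrib)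
      have e2: "\<bar>t * (D/2) - t' * (D/2)\<bar> = \<bar>(t - t') * (D/2)\<bar>"
        by (simp only: left_diff_distrib)
      have "\<bar>s * (D/2) - s' * (D/2)\<bar> = \<bar>s - s'\<bar> * (D/2)"
        unfolding e1 using assms(2) by (simp add: abs_mult)
      moreover have "\<bar>t * (D/2) - t' * (D/2)\<bar> = \<bar>t - t'\<bar> * (D/2)"
        unfolding e2 using assms(2) by (simp add: abs_mult)
      ultimately show ?thesis using that unfolding dmax_def cor_def by auto
    qed
    ultimately show False by simp
  qed
  have k1: "S 1 1 = Z1 \<or> S 1 1 = Z2 \<or> S 1 1 = Z3" by (rule key) auto
  have k2: "S 1 (-1) = Z1 \<or> S 1 (-1) = Z2 \<or> S 1 (-1) = Z3" by (rule key) auto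
  have k3: "S (-1) 1 = Z1 \<or> S (-1) 1 = Z2 \<or> S (-1) 1 = Z3" by (rule key) auto
  have k4: "S (-1) (-1) = Z1 \<or> S (-1) (-1) = Z2 \<or> S (-1) (-1) = Z3" by (rule key) auto
  have d1: "S 1 1 \<noteq> S 1 (-1)" "S 1 1 \<noteq> S (-1) 1" "S 1 1 \<noteq> S (-1) (-1)"
    "S 1 (-1) \<noteq> S (-1) 1" "S 1 (-1) \<noteq> S (-1) (-1)" "S (-1) 1 \<noteq> S (-1) (-1)"
    by (rule distinct; simp)+
  show False using k1 k2 k3 k4 d1 by metis
qed

end
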